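(* Let $G$ be a finite abelian group and let $f$ be an automorphism of $\mathcal{P}_{0}(G)$ with pullback $g$. Then $g$ is an automorphism of $G$.
   Context: For an additively written finite abelian group $G$, $\mathcal{P}_{0}(G)$ is the monoid of all subsets of $G$ containing $0$, with setwise addition and identity $\{0\}$. Every automorphism $f$ of $\mathcal{P}_0(G)$ maps $2$-element sets to $2$-element sets; the pullback of $f$ is the bijection $g:G\to G$ defined by $g(0)=0$ and, for nonzero $a\in G$, by $f(\{0,a\})=\{0,g(a)\}$. *)

theory Defs
  imports Main
begin

definition setplus :: "'a::plus set \<Rightarrow> 'a set \<Rightarrow> 'a set" where
  "setplus A B = {a + b | a b. a \<in> A \<and> b \<in> B}"

definition P0 :: "'a::zero set set" where
  "P0 = {A. 0 \<in> A}"

definition P0_automorphism :: "('a::{zero,plus} set \<Rightarrow> 'a set) \<Rightarrow> bool" where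
  "P0_automorphism f \<longleftrightarrow>
     bij_betw f P0 P0 \<and>
     (\<forall>A\<in>P0. \<forall>B\<in>P0. f (setplus A B) = setplus (f A) (f B)) \<and>
     f {0} = {0}"

definition pullback :: "('a::zero set \<Rightarrow> 'a set) \<Rightarrow> 'a \<Rightarrow> 'a" where
  "pullback f a = (if a = 0 then 0 else (THE b. f {0, a} = {0, b}))"

definition group_automorphism :: "('a::plus \<Rightarrow> 'a) \<Rightarrow> bool" where
  "group_automorphism g \<longleftrightarrow> bij g \<and> (\<forall>x y. g (x + y) = g x + g y)"

end

theory Submission
  imports Defs
begin

lemma mem_setplus: "z \<in> setplus A B \<longleftrightarrow> (\<exists>a\<in>A. \<exists>b\<in>B. z = a + b)"
  unfolding setplus_def by blast

lemma P0_iff: "A \<in> P0 \<longleftrightarrow> 0 \<in> A" unfolding P0_def by simp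

lemma setplus_P0: "A \<in> P0 \<Longrightarrow> B \<in> P0 \<Longrightarrow> setplus A (B::'a::monoid_add set) \<in> P0"
  unfolding P0_iff mem_setplus by (metis add_0)

lemma setplus_two: "setplus {0,x} A = A \<union> (\<lambda>y. x + y) ` (A::'a::monoid_add set)"
  unfolding set_eq_iff mem_setplus by auto

lemma setplus_comm: "setplus A (B::'a::ab_semigroup_add set) = setplus B A"
  unfolding set_eq_iff mem_setplus using add.commute by blast

lemma setplus_UNIV: "0 \<in> (A::'a::monoid_add set) \<Longrightarrow> setplus UNIV A = UNIV"
  unfolding set_eq_iff mem_setplus by (metis UNIV_I add_0_right)

lemma setplus_two_r: "setplus A {0,x} = A \<union> (\<lambda>y. x + y) ` (A::'a::comm_monoid_add set)"
  unfolding set_eq_iff mem_setplus by (auto simp: add.commute)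

lemma setplus_insert: "setplus (insert a A) B = (\<lambda>b. a + b) ` B \<union> setplus A B"
  by (auto simp: set_eq_iff mem_setplus)

lemma setplus_empty: "setplus {} B = {}"
  unfolding set_eq_iff mem_setplus by auto

lemma sp2: "setplus {0,x} {0,y} = {0,x,y,x+(y::'a::monoid_add)}"
  by (auto simp: setplus_two)

lemma sp3: "setplus (setplus {0,x} {0,y}) {0,z} = {0,x,y,x+y,z,z+x,z+y,z+(x+(y::'a::ab_group_add))}"
  by (auto simp: setplus_two sp2 setplus_comm[of _ "{0,z}"])

definition R :: "'a::ab_group_add set \<Rightarrow> 'a set \<Rightarrow> bool" where
  "R A B \<longleftrightarrow> (\<forall>X\<in>P0. setplus X A = UNIV \<longrightarrow> setplus X B = UNIV)"

definition T :: "'a::ab_group_add set \<Rightarrow> 'a set \<Rightarrow> bool" where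
  "T A B \<longleftrightarrow> (\<exists>t. (\<lambda>x. t + x) ` A \<subseteq> B)"

lemma T_imp_R: assumes "T A B" shows "R A B"
  unfolding R_def
proof (intro ballI impI)
  fix X assume X: "X \<in> P0" "setplus X A = UNIV"
  obtain t where t: "(\<lambda>x. t + x) ` A \<subseteq> B" using assms unfolding T_def by blast
  { fix z
    have "z - t \<in> setplus X A" using X by simp
    then obtain x a where xa: "x \<in> X" "a \<in> A" "z - t = x + a" unfolding mem_setplus by blast
    have "t + a \<in> B" using t xa by blast
    moreover have "z = x + (t + a)" using xa by (simp add: algebra_simps)
    ultimately have "z \<in> setplus X B" using xa unfolding mem_setplus by blast }
  then show "setplus X B = UNIV" by blast
qed

lemma R_imp_T: assumes "R A B" shows "T A B"
proof (rule ccontr)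
  assume nT: "\<not> T A B"
  then have "B \<noteq> UNIV" unfolding T_def by blast
  then obtain h where h: "h \<notin> B" by auto
  define X where "X = {y. h - y \<notin> B}"
  have X0: "X \<in> P0" using h by (simp add: X_def P0_iff)
  have "setplus X A = UNIV"
  proof -
    { fix z
      have "\<not> (\<lambda>x. (h - z) + x) ` A \<subseteq> B" using nT unfolding T_def by blast
      then obtain a where a: "a \<in> A" "h - z + a \<notin> B" by auto
      have "h - (z - a) = h - z + a" by (simp add: algebra_simps)
      then have "z - a \<in> X" using a unfolding X_def by (metis mem_Collect_eq)
      moreover have "z = (z - a) + a" by simp
      ultimately have "z \<in> setplus X A" using a unfolding mem_setplus by blast }
    then show ?thesis by blast
  qed
  moreover have "h \<notin> setplus X B"
  proof
    assume "h \<in> setplus X B"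
    then obtain y b where yb: "y \<in> X" "b \<in> B" "h = y + b" unfolding mem_setplus by blast
    then have "h - y = b" by simp
    then show False using yb by (simp add: X_def)
  qed
  ultimately show False using assms X0 unfolding R_def by auto
qed

lemma R_iff_T: "R A B \<longleftrightarrow> T A B" using R_imp_T T_imp_R by blast

lemma T_zero: assumes "A \<in> P0" shows "T A {0} \<longleftrightarrow> A = {0}"
proof
  assume "T A {0}"
  then obtain t where t: "(\<lambda>x. t + x) ` A \<subseteq> {0}" unfolding T_def by blast
  have "t = 0" using t assms by (auto simp: P0_iff)
  then show "A = {0}" using t assms by (auto simp: P0_iff)
next
  assume "A = {0}" then show "T A {0}" unfolding T_def by (intro exI[of _ 0]) auto
qed

definition C2 :: "'a::ab_group_add set \<Rightarrow> bool" where
  "C2 A \<longleftrightarrow> \<not> T A {0} \<and> (\<forall>B\<in>P0. T B A \<longrightarrow> T B {0} \<or> T A B)"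

lemma card_translate: "card ((\<lambda>x. t + x) ` (A::'a::group_add set)) = card A"
  by (rule card_image) (simp add: inj_on_def)

lemma C2_iff:
  fixes A :: "'a::{ab_group_add,finite} set"
  assumes A: "A \<in> P0" shows "C2 A \<longleftrightarrow> card A = 2"
proof
  assume C: "C2 A"
  then have "A \<noteq> {0}" using T_zero[OF A] unfolding C2_def by blast
  then obtain a where a: "a \<in> A" "a \<noteq> 0" using A by (auto simp: P0_iff)
  let ?B = "{0,a}"
  have B: "?B \<in> P0" by (simp add: P0_iff)
  have "T ?B A" unfolding T_def using a A by (intro exI[of _ 0]) (auto simp: P0_iff)
  moreover have "\<not> T ?B {0}" using T_zero[OF B] a by auto
  ultimately have "T A ?B" using C B unfolding C2_def by blast
  then obtain t where t: "(\<lambda>x. t + x) ` A \<subseteq> ?B" unfolding T_def by blast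
  have "card A \<le> 2" using card_mono[OF _ t] card_translate[of t A] a by (simp add: card_insert_if)
  moreover have "card ?B \<le> card A" using a A by (intro card_mono) (auto simp: P0_iff)
  ultimately show "card A = 2" using a by simp
next
  assume c: "card A = 2"
  then obtain p q where pq: "A = {p,q}" "p \<noteq> q" by (auto simp: card_2_iff)
  have "A \<noteq> {0}" using pq by auto
  then have nT: "\<not> T A {0}" using T_zero[OF A] by blast
  have "T B {0} \<or> T A B" if B: "B \<in> P0" "T B A" for B
  proof (cases "B = {0}")
    case True then show ?thesis using T_zero[OF B(1)] by blast
  next
    case False
    then obtain b where b: "b \<in> B" "b \<noteq> 0" using B by (auto simp: P0_iff)
    obtain t where t: "(\<lambda>x. t + x) ` B \<subseteq> A" using B unfolding T_def by blast
    have "card B \<le> 2" using card_mono[OF _ t] card_translate[of t B] c by simp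
    moreover have "card {0,b} \<le> card B" using b B by (intro card_mono) (auto simp: P0_iff)
    ultimately have "card B = 2" using b by simp
    then have "(\<lambda>x. t + x) ` B = A" using t c card_translate[of t B] by (intro card_subset_eq) auto
    then have "(\<lambda>x. - t + x) ` A = B" by (auto simp: image_image)
    then have "T A B" unfolding T_def by blast
    then show ?thesis by blast
  qed
  then show "C2 A" using nT unfolding C2_def by blast
qed

locale P0aut =
  fixes f :: "'a::{ab_group_add,finite} set \<Rightarrow> 'a set"
  assumes aut: "P0_automorphism f"
begin

lemma bij: "bij_betw f P0 P0" using aut unfolding P0_automorphism_def by blast
lemma hom: "A \<in> P0 \<Longrightarrow> B \<in> P0 \<Longrightarrow> f (setplus A B) = setplus (f A) (f B)"
  using aut unfolding P0_automorphism_def by blast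
lemma f0: "f {0} = {0}" using aut unfolding P0_automorphism_def by blast

lemma fP0: "A \<in> P0 \<Longrightarrow> f A \<in> P0" using bij by (auto simp: bij_betw_def)
lemma finj: "A \<in> P0 \<Longrightarrow> B \<in> P0 \<Longrightarrow> f A = f B \<Longrightarrow> A = B"
  using bij by (auto simp: bij_betw_def inj_on_def)
lemma fsurj: "B \<in> P0 \<Longrightarrow> \<exists>A\<in>P0. f A = B" using bij unfolding bij_betw_def by (metis imageE)

lemma UNIV_P0: "UNIV \<in> P0" by (simp add: P0_iff)

lemma fUNIV: "f UNIV = UNIV"
proof -
  obtain Z where Z: "Z \<in> P0" "f Z = UNIV" using fsurj[OF UNIV_P0] by blast
  have "f (setplus UNIV Z) = setplus (f UNIV) (f Z)" using Z UNIV_P0 by (intro hom)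
  also have "setplus UNIV Z = UNIV" using Z by (simp add: setplus_UNIV P0_iff)
  also have "setplus (f UNIV) (f Z) = UNIV"
    using Z fP0[OF UNIV_P0] by (simp add: setplus_comm[of "f UNIV"] setplus_UNIV P0_iff)
  finally show ?thesis .
qed

lemma R_f: assumes A: "A \<in> P0" and B: "B \<in> P0" shows "R (f A) (f B) \<longleftrightarrow> R A B"
proof
  assume H: "R (f A) (f B)"
  show "R A B" unfolding R_def
  proof (intro ballI impI)
    fix X assume X: "X \<in> P0" "setplus X A = UNIV"
    have "setplus (f X) (f A) = UNIV" using X A hom fUNIV by metis
    then have "setplus (f X) (f B) = UNIV" using H fP0 X unfolding R_def by blast
    then have "f (setplus X B) = f UNIV" using hom X B fUNIV by metis
    then show "setplus X B = UNIV" using finj setplus_P0 X B UNIV_P0 by metis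
  qed
next
  assume H: "R A B"
  show "R (f A) (f B)" unfolding R_def
  proof (intro ballI impI)
    fix X' assume X': "X' \<in> P0" "setplus X' (f A) = UNIV"
    obtain X where X: "X \<in> P0" "f X = X'" using fsurj X' by blast
    have "f (setplus X A) = f UNIV" using X X' hom A fUNIV by metis
    then have "setplus X A = UNIV" using finj setplus_P0 X A UNIV_P0 by metis
    then have "setplus X B = UNIV" using H X unfolding R_def by blast
    then show "setplus X' (f B) = UNIV" using hom X B fUNIV by metis
  qed
qed

lemma T_f: "A \<in> P0 \<Longrightarrow> B \<in> P0 \<Longrightarrow> T (f A) (f B) \<longleftrightarrow> T A B"
  using R_f by (simp add: R_iff_T)

lemma C2_f: assumes A: "A \<in> P0" shows "C2 (f A) \<longleftrightarrow> C2 A"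
proof -
  have Z: "{0} \<in> P0" by (simp add: P0_iff)
  have 1: "T (f A) {0} \<longleftrightarrow> T A {0}" using T_f[OF A Z] f0 by simp
  have 2: "(\<forall>B\<in>P0. T B (f A) \<longrightarrow> T B {0} \<or> T (f A) B) \<longleftrightarrow> (\<forall>B\<in>P0. T B A \<longrightarrow> T B {0} \<or> T A B)"
  proof
    assume H: "\<forall>B\<in>P0. T B (f A) \<longrightarrow> T B {0} \<or> T (f A) B"
    show "\<forall>B\<in>P0. T B A \<longrightarrow> T B {0} \<or> T A B"
    proof (intro ballI impI)
      fix B assume B: "B \<in> P0" "T B A"
      have "T (f B) (f A)" using B T_f[OF B(1) A] by simp
      then have "T (f B) {0} \<or> T (f A) (f B)" using H fP0[OF B(1)] by blast
      then show "T B {0} \<or> T A B" using T_f[OF B(1) Z] T_f[OF A B(1)] f0 by simp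
    qed
  next
    assume H: "\<forall>B\<in>P0. T B A \<longrightarrow> T B {0} \<or> T A B"
    show "\<forall>B\<in>P0. T B (f A) \<longrightarrow> T B {0} \<or> T (f A) B"
    proof (intro ballI impI)
      fix B' assume B': "B' \<in> P0" "T B' (f A)"
      obtain B where B: "B \<in> P0" "f B = B'" using fsurj B' by blast
      have "T B A" using B B' T_f[OF B(1) A] by simp
      then have "T B {0} \<or> T A B" using H B by blast
      then show "T B' {0} \<or> T (f A) B'" using T_f[OF B(1) Z] T_f[OF A B(1)] f0 B by simp
    qed
  qed
  show ?thesis unfolding C2_def using 1 2 by blast
qed

lemma card2_f: "A \<in> P0 \<Longrightarrow> card (f A) = 2 \<longleftrightarrow> card A = 2"
  using C2_f C2_iff fP0 by metis

abbreviation g where "g \<equiv> pullback f"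

lemma f_pair_ne: assumes x: "x \<noteq> 0" shows "f {0,x} = {0, g x} \<and> g x \<noteq> 0"
proof -
  have P: "{0,x} \<in> P0" by (simp add: P0_iff)
  have "card (f {0,x}) = 2" using card2_f[OF P] x by simp
  moreover have "0 \<in> f {0,x}" using fP0[OF P] by (simp add: P0_iff)
  ultimately obtain b where b: "f {0,x} = {0,b}" "b \<noteq> 0"
    by (auto simp: card_2_iff) (metis insert_commute insertE singletonD)+
  have "(THE b. f {0,x} = {0,b}) = b"
  proof (rule the_equality)
    show "f {0,x} = {0,b}" by (rule b(1))
  next
    fix b' assume "f {0,x} = {0,b'}"
    then have "{0,b} = {0,b'}" using b by simp
    then show "b' = b" using b(2) by (metis insertE insert_iff singletonD)
  qed
  then have "g x = b" using x unfolding pullback_def by simp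
  then show ?thesis using b by simp
qed

lemma g0: "g 0 = 0" unfolding pullback_def by simp

lemma f_pair: "f {0,x} = {0, g x}"
  using f_pair_ne[of x] f0 g0 by (cases "x = 0") auto

lemma g_nz: "x \<noteq> 0 \<Longrightarrow> g x \<noteq> 0" using f_pair_ne by blast

lemma g_inj: "inj g"
proof (rule injI)
  fix x y assume "g x = g y"
  then have "f {0,x} = f {0,y}" by (simp add: f_pair)
  then have "{0,x} = {0,y}" using finj by (simp add: P0_iff)
  then show "x = y" by (metis insertE insert_iff singletonD)
qed

lemma g_eq_iff: "g x = g y \<longleftrightarrow> x = y" using g_inj by (auto simp: inj_on_def)

lemma g_bij: "bij g" using g_inj finite_UNIV_inj_surj[of g] by (simp add: bij_def)


lemma pairP0: "{0,x} \<in> P0" by (simp add: P0_iff)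

lemma f2: "f (setplus {0,x} {0,y}) = setplus {0, g x} {0, g y}"
  by (simp add: hom[OF pairP0 pairP0] f_pair)

lemma f3: "f (setplus (setplus {0,x} {0,y}) {0,z}) = setplus (setplus {0,g x} {0,g y}) {0,g z}"
  by (simp add: hom[OF setplus_P0[OF pairP0 pairP0] pairP0] f2 f_pair)

lemma g_double: "g (x + x) = g x + g x"
proof (cases "x = 0")
  case True then show ?thesis by (simp add: g0)
next
  case x: False
  define u where "u = g x"
  define w where "w = g (x + x)"
  have u0: "u \<noteq> 0" using g_nz x u_def by simp
  show ?thesis
  proof (cases "x + x = 0")
    case True
    have "setplus {0,x} {0,x} = {0,x}" using True by (auto simp: sp2)
    then have "f (setplus {0,x} {0,x}) = f {0,x}" by simp
    then have E: "setplus {0,u} {0,u} = {0,u}" by (simp add: f2 f_pair u_def)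
    have "u + u \<in> setplus {0,u} {0,u}" by (simp add: sp2)
    then have "u + u \<in> {0,u}" using E by simp
    then have "u + u = 0" using u0 by auto
    then show ?thesis using True by (simp add: g0 u_def)
  next
    case xx: False
    have w0: "w \<noteq> 0" using xx g_eq_iff[of "x+x" 0] g0 w_def by simp
    have wu: "w \<noteq> u" using x g_eq_iff[of "x+x" x] w_def u_def by simp
    have id: "setplus (setplus {0,x} {0,x}) {0,x} = setplus {0,x} {0,x+x}"
      by (auto simp: setplus_two setplus_two_r add.assoc)
    have E: "setplus (setplus {0,u} {0,u}) {0,u} = setplus {0,u} {0,w}"
      using arg_cong[OF id, of f] by (simp add: f2 f3 u_def w_def)
    have "w \<in> setplus {0,u} {0,w}" by (simp add: sp2)
    then have m1: "w \<in> setplus (setplus {0,u} {0,u}) {0,u}" using E by simp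
    have "u + u \<in> setplus (setplus {0,u} {0,u}) {0,u}" by (simp add: setplus_two setplus_two_r)
    then have m2: "u + u \<in> setplus {0,u} {0,w}" using E by simp
    have "w = u + u"
    proof (rule ccontr)
      assume nw: "w \<noteq> u + u"
      then have w3: "w = u + (u + u)" using m1 w0 wu by (auto simp: setplus_two setplus_two_r)
      show False using m2 u0 wu unfolding sp2 w3 by auto
    qed
    then show ?thesis by (simp add: u_def w_def)
  qed
qed

lemma g_neg: "g (- x) = - g x"
proof (cases "x = 0")
  case True then show ?thesis by (simp add: g0)
next
  case x: False
  define u where "u = g x"
  define y where "y = g (- x)"
  have u0: "u \<noteq> 0" using g_nz x u_def by simp
  have id: "setplus {0,-x} (setplus {0,x} {0,x}) = setplus {0,-x} {0,x+x}"
    by (auto simp: setplus_two setplus_two_r)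
  have "f (setplus {0,-x} (setplus {0,x} {0,x})) = setplus {0,y} (setplus {0,u} {0,u})"
    by (simp add: hom[OF pairP0 setplus_P0[OF pairP0 pairP0]] f2 f_pair u_def y_def)
  moreover have "f (setplus {0,-x} {0,x+x}) = setplus {0,y} {0,u+u}"
    by (simp add: hom[OF pairP0 pairP0] f_pair g_double u_def y_def)
  ultimately have E: "setplus {0,y} (setplus {0,u} {0,u}) = setplus {0,y} {0,u+u}" using id by simp
  have "u \<in> setplus {0,y} (setplus {0,u} {0,u})" by (simp add: setplus_two setplus_two_r)
  then have "u \<in> {0, y, u + u, y + (u + u)}" using E by (simp add: sp2)
  then consider "u = y" | "u = y + (u + u)" using u0 by auto
  then show ?thesis
  proof cases
    case 1
    then have "x = - x" using g_eq_iff u_def y_def by simp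
    then have "x + x = 0" by (metis add.right_inverse)
    then have "u + u = 0" using g_double g0 u_def by metis
    then show ?thesis using 1 by (simp add: u_def y_def eq_neg_iff_add_eq_0)
  next
    case 2
    then show ?thesis by (simp add: u_def y_def eq_neg_iff_add_eq_0)
  qed
qed


lemma g_triple: "g (x + x + x) = g x + g x + g x"
proof -
  define u where "u = g x"
  have u2: "g (x + x) = u + u" using g_double u_def by simp
  show ?thesis
  proof (cases "x = 0")
    case True then show ?thesis by (simp add: g0)
  next
    case x: False
    have u0: "u \<noteq> 0" using g_nz x u_def by simp
    show ?thesis
    proof (cases "x + x = 0")
      case True
      then have "u + u = 0" using u2 g0 by simp
      then show ?thesis using True by (simp add: u_def)
    next
      case xx: False
      show ?thesis
      proof (cases "x + x + x = 0")
        case True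
        then have "x + x = - x" by (simp add: eq_neg_iff_add_eq_0)
        then have "u + u = - u" using u2 g_neg u_def by metis
        then have "u + u + u = 0" by (simp add: eq_neg_iff_add_eq_0)
        then show ?thesis using True g0 u_def by simp
      next
        case xxx: False
        define w where "w = g (x + x + x)"
        have w0: "w \<noteq> 0" using xxx g_eq_iff[of "x+x+x" 0] g0 w_def by simp
        have wu: "w \<noteq> u" using xx g_eq_iff[of "x+x+x" x] w_def u_def by simp
        have wuu: "w \<noteq> u + u" using x g_eq_iff[of "x+x+x" "x+x"] w_def u2 by simp
        have id: "setplus (setplus {0,x} {0,x}) {0,x+x+x} =
                  setplus (setplus (setplus {0,x} {0,x}) {0,x}) (setplus {0,x} {0,x})"
          by (auto simp: setplus_two setplus_two_r setplus_insert setplus_empty add.assoc)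
        have P3: "setplus (setplus {0,x} {0,x}) {0,x} \<in> P0"
          by (intro setplus_P0 pairP0)
        have "f (setplus (setplus (setplus {0,x} {0,x}) {0,x}) (setplus {0,x} {0,x}))
              = setplus (setplus (setplus {0,u} {0,u}) {0,u}) (setplus {0,u} {0,u})"
          by (simp add: hom[OF P3 setplus_P0[OF pairP0 pairP0]] f2 f3 u_def)
        moreover have "f (setplus (setplus {0,x} {0,x}) {0,x+x+x}) = setplus (setplus {0,u} {0,u}) {0,w}"
          by (simp add: f3 u_def w_def)
        ultimately have E: "setplus (setplus {0,u} {0,u}) {0,w} =
              setplus (setplus (setplus {0,u} {0,u}) {0,u}) (setplus {0,u} {0,u})"
          using id by simp
        have "w \<in> setplus (setplus {0,u} {0,u}) {0,w}" by (simp add: setplus_two setplus_two_r)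
        then have m1: "w \<in> setplus (setplus (setplus {0,u} {0,u}) {0,u}) (setplus {0,u} {0,u})"
          using E by simp
        have "u + u + u \<in> setplus (setplus (setplus {0,u} {0,u}) {0,u}) (setplus {0,u} {0,u})"
          unfolding mem_setplus by (auto simp: setplus_two setplus_two_r)
        then have m2: "u + u + u \<in> setplus (setplus {0,u} {0,u}) {0,w}" using E by simp
        have "w = u + u + u"
        proof (rule ccontr)
          assume nw: "w \<noteq> u + u + u"
          have c: "w = u + u + u + u \<or> w = u + u + u + u + u"
            using m1 w0 wu wuu nw unfolding mem_setplus setplus_two setplus_two_r
            by (auto simp: algebra_simps)
          have m2': "u + u + u \<in> {0, u, u + u, w, w + u, w + (u + u)}"
            using m2 by (auto simp: setplus_two setplus_two_r algebra_simps)
          show False using c m2' u0 w0 wu wuu by (auto simp: algebra_simps)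
        qed
        then show ?thesis by (simp add: u_def w_def)
      qed
    qed
  qed
qed

lemma g_add_ord2: assumes aa: "a + a = 0" shows "g (a + b) = g a + g b"
proof -
  define u v w where "u = g a" and "v = g b" and "w = g (a + b)"
  show ?thesis
  proof (cases "a = 0 \<or> b = 0")
    case True then show ?thesis by (auto simp: g0)
  next
    case False
    then have a0: "a \<noteq> 0" and b0: "b \<noteq> 0" by auto
    show ?thesis
    proof (cases "a + b = 0")
      case True
      have "b = a" using True aa by (metis add_left_cancel)
      then show ?thesis using True aa g_double g0 by metis
    next
      case ab: False
      have w0: "w \<noteq> 0" using ab g_eq_iff[of "a+b" 0] g0 w_def by simp
      have wu: "w \<noteq> u" using b0 g_eq_iff[of "a+b" a] w_def u_def by simp
      have wv: "w \<noteq> v" using a0 g_eq_iff[of "a+b" b] w_def v_def by simp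
      have aab: "a + (a + b) = b" using aa by (metis add.assoc add_0)
      have id: "setplus {0,a} {0,b} = setplus {0,a} {0,a+b}"
        by (auto simp: setplus_two aab)
      have E: "setplus {0,u} {0,v} = setplus {0,u} {0,w}"
        using arg_cong[OF id, of f] by (simp add: f2 u_def v_def w_def)
      have "w \<in> setplus {0,u} {0,w}" by (simp add: setplus_two)
      then have "w \<in> setplus {0,u} {0,v}" using E by simp
      then have "w = u + v" using w0 wu wv by (auto simp: setplus_two)
      then show ?thesis by (simp add: u_def v_def w_def)
    qed
  qed
qed


lemma key1:
  assumes h: "a - b \<in> {0, a, b, a + b, - a, - b, - (a + b)}"
  shows "g (a + b) = g a + g b"
proof -
  from h consider "a - b = 0" | "a - b = a" | "a - b = b" | "a - b = a + b" | "a - b = - a"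
    | "a - b = - b" | "a - b = - (a + b)" by blast
  then show ?thesis
  proof cases
    case 1 then have "a = b" by simp
    then show ?thesis using g_double by simp
  next
    case 2 then have "b = 0" by simp
    then show ?thesis by (simp add: g0)
  next
    case 3 then have a: "a = b + b" by (simp add: algebra_simps)
    then have "a + b = b + b + b" by simp
    then show ?thesis using a g_triple g_double by simp
  next
    case 4 then have "b + b = 0" by (simp add: algebra_simps)
    then show ?thesis using g_add_ord2[of b a] by (simp add: add.commute)
  next
    case 5 then have b: "b = a + a" by (simp add: algebra_simps)
    have "g (a + b) = g (a + a + a)" using b by (simp add: add.assoc)
    also have "\<dots> = g a + g a + g a" by (rule g_triple)
    also have "\<dots> = g a + g b" using b g_double by (simp add: add.assoc)
    finally show ?thesis .
  next
    case 6 then have "a = 0" by simp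
    then show ?thesis by (simp add: g0)
  next
    case 7 then have "a = - a" by (simp add: algebra_simps)
    then have "a + a = 0" by (metis add.right_inverse)
    then show ?thesis using g_add_ord2 by simp
  qed
qed

lemma key2:
  assumes h: "a + a + b \<in> {0, a, b, a + b, - a, - b, - (a + b)}"
  shows "g (a + b) = g a + g b"
proof -
  from h consider "a + a + b = 0" | "a + a + b = a" | "a + a + b = b" | "a + a + b = a + b"
    | "a + a + b = - a" | "a + a + b = - b" | "a + a + b = - (a + b)" by blast
  then show ?thesis
  proof cases
    case 1 then have "b + (a + a) = 0" by (metis add.commute)
    then have b: "b = - (a + a)" by (rule eq_neg_iff_add_eq_0[THEN iffD2])
    then have ab: "a + b = - a" by simp
    have gb: "g b = - (g a + g a)" by (simp only: b g_neg g_double)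
    show ?thesis by (simp only: ab g_neg gb) (simp add: algebra_simps)
  next
    case 2 then have "b = - a" by (simp add: eq_neg_iff_add_eq_0 add.commute)
    then show ?thesis using g_neg by (simp add: g0)
  next
    case 3 then have "a + a = 0" by simp
    then show ?thesis using g_add_ord2 by simp
  next
    case 4 then have "a = 0" by simp
    then show ?thesis by (simp add: g0)
  next
    case 5 then have b: "b = - (a + a + a)" by (simp add: eq_neg_iff_add_eq_0 algebra_simps)
    then have ab: "a + b = - (a + a)" by (simp add: algebra_simps)
    have "g (a + b) = - (g a + g a)" by (simp only: ab g_neg g_double)
    moreover have "g b = - (g a + g a + g a)" by (simp only: b g_neg g_triple)
    ultimately show ?thesis by (simp add: algebra_simps) (metis add_left_cancel)
  next
    case 6 then have "a + a + b + b = 0" by (rule eq_neg_iff_add_eq_0[THEN iffD1])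
    then have "(a + b) + (a + b) = 0" by (metis add.assoc add.commute add.left_commute)
    then have "g ((a + b) + - b) = g (a + b) + g (- b)" by (rule g_add_ord2)
    then show ?thesis using g_neg by (simp add: algebra_simps)
  next
    case 7
    define c where "c = a + b"
    have a: "a = - (c + c)" using 7 unfolding c_def by (simp add: eq_neg_iff_add_eq_0 algebra_simps)
    have b: "b = c + c + c" using 7 unfolding c_def by (simp add: eq_neg_iff_add_eq_0 algebra_simps)
    have ga: "g a = - (g c + g c)" by (simp only: a g_neg g_double)
    have gb: "g b = g c + g c + g c" by (simp only: b g_triple)
    show ?thesis unfolding c_def[symmetric] ga gb by (simp add: algebra_simps)
  qed
qed

lemma g_add: "g (a + b) = g a + g b"
proof -
  define u v w where "u = g a" and "v = g b" and "w = g (a + b)"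
  define t where "t = w - u - v"
  define D where "D = setplus (setplus {0,a} {0,b}) {0,-(a+b)}"
  have Dexp: "D = {0, a, b, a + b, - a, - b, - (a + b)}"
    unfolding D_def by (auto simp: setplus_two setplus_two_r algebra_simps)
  have D2: "D = setplus (setplus {0,-a} {0,-b}) {0,a+b}"
    unfolding Dexp by (auto simp: setplus_two setplus_two_r algebra_simps)
  have DP: "D \<in> P0" unfolding D_def by (intro setplus_P0 pairP0)
  define L where "L = setplus (setplus {0,u} {0,v}) {0,-w}"
  have fD: "f D = L" unfolding D_def L_def f3 g_neg u_def v_def w_def by (rule refl)
  have fD2: "f D = setplus (setplus {0,-u} {0,-v}) {0,w}"
    unfolding D2 f3 g_neg u_def v_def w_def by (rule refl)
  have Lt: "setplus (setplus {0,-u} {0,-v}) {0,w} = (\<lambda>y. t + y) ` L"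
    unfolding L_def t_def by (auto simp: setplus_two setplus_two_r algebra_simps)
  have stab: "setplus {0,t} L = L"
    using fD fD2 Lt by (simp add: setplus_two)
  show ?thesis
  proof (cases "t = 0")
    case True then show ?thesis by (simp add: t_def u_def v_def w_def algebra_simps)
  next
    case False
    obtain s where s: "g s = t" using g_bij by (metis bij_pointE)
    have s0: "s \<noteq> 0" using False g0 s by auto
    have "f (setplus {0,s} D) = setplus {0,t} L"
      using hom[OF pairP0 DP] f_pair s fD by simp
    then have "f (setplus {0,s} D) = f D" using stab fD by simp
    then have sD: "setplus {0,s} D = D" using finj setplus_P0[OF pairP0 DP] DP by blast
    have closed: "s + y \<in> D" if "y \<in> D" for y
      using that sD by (metis UnI2 image_eqI setplus_two)
    have negD: "- y \<in> D" if "y \<in> D" for y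
      using that unfolding Dexp by (elim insertE emptyE) simp_all
    have inD: "0 \<in> D" "a \<in> D" "b \<in> D" "a + b \<in> D" "- a \<in> D" "- b \<in> D" "- (a + b) \<in> D"
      unfolding Dexp by simp_all
    have "s \<in> D" using closed[OF inD(1)] by simp
    then have "s = a \<or> s = b \<or> s = a + b \<or> s = - a \<or> s = - b \<or> s = - (a + b)"
      using s0 unfolding Dexp by blast
    then have "a - b \<in> D \<or> a + a + b \<in> D"
    proof (elim disjE)
      assume "s = a" then show ?thesis using closed[OF inD(6)] by simp
    next
      assume "s = b" then show ?thesis using negD[OF closed[OF inD(5)]] by simp
    next
      assume sa: "s = a + b"
      have "a + b + a = a + a + b" by (simp add: algebra_simps)
      then show ?thesis using closed[OF inD(2)] sa by metis
    next
      assume "s = - a" then show ?thesis using negD[OF closed[OF inD(3)]] by simp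
    next
      assume "s = - b" then show ?thesis using closed[OF inD(2)] by simp
    next
      assume sa: "s = - (a + b)"
      have "- (- (a + b) + - a) = a + a + b" by (simp add: algebra_simps)
      then show ?thesis using negD[OF closed[OF inD(5)]] sa by metis
    qed
    then show ?thesis
    proof
      assume "a - b \<in> D"
      then have "a - b \<in> {0, a, b, a + b, - a, - b, - (a + b)}" unfolding Dexp .
      then show ?thesis by (rule key1)
    next
      assume "a + a + b \<in> D"
      then have "a + a + b \<in> {0, a, b, a + b, - a, - b, - (a + b)}" unfolding Dexp .
      then show ?thesis by (rule key2)
    qed
  qed
qed

end

theorem proposition2p6:
  fixes f :: "'a::{ab_group_add, finite} set \<Rightarrow> 'a set"
  assumes "P0_automorphism f"
  shows "group_automorphism (pullback f)"
proof -
  interpret P0aut f by (rule P0aut.intro) (rule assms)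
  show ?thesis unfolding group_automorphism_def using g_bij g_add by blast
qed

end
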